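(* Let $m,n,\beta\geq 1$ be integers and let $A\in\mathbb{C}^{m\times\beta}$, $B\in\mathbb{C}^{n\times\beta}$ be nonzero. Then \[ AA^*\otimes BB^* \;\succcurlyeq\; \frac{1}{\min(\operatorname{rk} AA^*,\operatorname{rk} BB^* )}\,\mathrm{vec}(BA^T)\,\mathrm{vec}(BA^T)^* \;\succcurlyeq\; 0 . \] Moreover, the coefficient $1/\min(\operatorname{rk}AA^*,\operatorname{rk}BB^* )$ is best possible, in the sense that it cannot be replaced by a larger constant uniformly over all such $A,B$: there exist nonzero $A\in\mathbb{C}^{m\times\beta}$, $B\in\mathbb{C}^{n\times\beta}$ and $u\in\mathbb{C}^{mn}$ with $\mathrm{vec}(BA^T)^*u\neq 0$ such that $u^*(AA^*\otimes BB^* )u=\frac{1}{\min(\operatorname{rk}AA^*,\operatorname{rk}BB^* )}\,|\mathrm{vec}(BA^T)^*u|^2$.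
   Context: $A\otimes B$ denotes the standard Kronecker product (the block matrix whose $(i,j)$-th block is $a_{ij}B$). For $P\in\mathbb{C}^{n\times m}$, $\mathrm{vec}(P)\in\mathbb{C}^{mn}$ is the column vector obtained by stacking the columns of $P$ (so its entry in position $n(i_1-1)+i_2$ is $P_{i_2,i_1}$). $\operatorname{rk}$ denotes rank, $X^*$ the conjugate transpose, $X^T$ the transpose. For Hermitian matrices, $X\succcurlyeq Y$ (Loewner order) means $X-Y$ is positive semidefinite. *)

theory Defs
  imports "HOL-Analysis.Analysis"
begin

text \<open>Matrices in C^(p x q) are represented as complex^'q^'p (rows indexed by 'p).
  Index sets {1..mn} are represented by the product type 'm \<times> 'n, where the pair (i1,i2)
  corresponds to position n(i1-1)+i2 (lexicographic order).\<close>

definition conj_transpose :: "complex^'q^'p \<Rightarrow> complex^'p^'q" where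
  "conj_transpose X = (\<chi> i j. cnj (X $ j $ i))"

definition kron :: "complex^'j^'i \<Rightarrow> complex^'l^'k \<Rightarrow> complex^('j \<times> 'l)^('i \<times> 'k)" where
  "kron X Y = (\<chi> r c. X $ fst r $ fst c * Y $ snd r $ snd c)"

definition vecm :: "complex^'m^'n \<Rightarrow> complex^('m \<times> 'n)" where
  "vecm P = (\<chi> p. P $ snd p $ fst p)"

definition outer :: "complex^'k \<Rightarrow> complex^'k \<Rightarrow> complex^'k^'k" where
  "outer x y = (\<chi> i j. x $ i * cnj (y $ j))"

definition cinner :: "complex^'k \<Rightarrow> complex^'k \<Rightarrow> complex" where
  "cinner x y = (\<Sum>i\<in>UNIV. cnj (x $ i) * y $ i)"

definition hermitian :: "complex^'k^'k \<Rightarrow> bool" where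
  "hermitian X \<longleftrightarrow> conj_transpose X = X"

definition psd :: "complex^'k^'k \<Rightarrow> bool" where
  "psd X \<longleftrightarrow> hermitian X \<and> (\<forall>v. cinner v (X *v v) \<in> \<real> \<and> 0 \<le> Re (cinner v (X *v v)))"

definition loewner_ge :: "complex^'k^'k \<Rightarrow> complex^'k^'k \<Rightarrow> bool" where
  "loewner_ge X Y \<longleftrightarrow> psd (X - Y)"

end

theory Submission
  imports Defs
begin


definition nsq :: "complex^'b \<Rightarrow> real" where
  "nsq x = (\<Sum>i\<in>UNIV. (cmod (x$i))\<^sup>2)"

definition qp :: "complex^'b \<Rightarrow> complex^'b \<Rightarrow> complex^'b" where
  "qp v y = y - (cinner v y / cinner v v) *s v"

lemma mcnj: "z * cnj z = (complex_of_real (cmod z))\<^sup>2"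
  by (metis complex_norm_square of_real_power)
lemma mcnj2: "cnj z * z = (complex_of_real (cmod z))\<^sup>2"
  by (metis mcnj mult.commute)

lemma cinner_add2: "cinner v (x + y) = cinner v x + cinner v y"
  by (simp add: cinner_def distrib_left sum.distrib)
lemma cinner_diff2: "cinner v (x - y) = cinner v x - cinner v y"
  by (simp add: cinner_def right_diff_distrib sum_subtractf)
lemma cinner_scale2: "cinner v (a *s y) = a * cinner v y"
  by (simp add: cinner_def sum_distrib_left algebra_simps)
lemma cinner_self: "cinner v v = of_real (nsq v)"
  by (simp add: cinner_def nsq_def mcnj2)
lemma nsq_ge0: "nsq v \<ge> 0" by (simp add: nsq_def sum_nonneg)
lemma nsq_eq0: "nsq v = 0 \<longleftrightarrow> v = 0"
  by (simp add: nsq_def sum_nonneg_eq_0_iff vec_eq_iff)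

lemma cinner_qp: "cinner v (qp v y) = 0"
proof (cases "v = 0")
  case True then show ?thesis by (simp add: cinner_def)
next
  case False
  then have "cinner v v \<noteq> 0" using cinner_self nsq_eq0 by (metis of_real_eq_0_iff)
  then show ?thesis by (simp add: qp_def cinner_diff2 cinner_scale2)
qed

lemma qp_self: "qp v v = 0"
proof (cases "v = 0")
  case True then show ?thesis by (simp add: qp_def)
next
  case False
  then have "cinner v v \<noteq> 0" using cinner_self nsq_eq0 by (metis of_real_eq_0_iff)
  then show ?thesis by (simp add: qp_def)
qed

lemma qp_linear: "Vector_Spaces.linear (*s) (*s) (qp v)"
  unfolding Vector_Spaces.linear_iff
  by (auto simp: qp_def cinner_add2 cinner_scale2 vec.vector_space_axioms algebra_simps
      add_divide_distrib vec_eq_iff)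

lemma nsq_pyth: "cinner v z = 0 \<Longrightarrow> nsq (a *s v + z) = (cmod a)\<^sup>2 * nsq v + nsq z"
proof -
  assume h: "cinner v z = 0"
  have "complex_of_real (nsq (a *s v + z)) = cinner (a *s v + z) (a *s v + z)"
    by (simp add: cinner_self)
  also have "\<dots> = cnj a * a * cinner v v + cnj a * cinner v z + a * cnj (cinner v z) + cinner z z"
    by (simp add: cinner_def sum.distrib sum_distrib_left algebra_simps)
  also have "\<dots> = of_real ((cmod a)\<^sup>2 * nsq v + nsq z)"
    using h by (simp add: cinner_self mcnj2)
  finally show ?thesis using of_real_eq_iff by blast
qed

lemma cs_sum: "(cmod (\<Sum>j\<in>UNIV. a j * (v::complex^'b) $ j))\<^sup>2 \<le> (\<Sum>j\<in>UNIV. (cmod (a j))\<^sup>2) * nsq v"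
proof -
  have "cmod (\<Sum>j\<in>UNIV. a j * v $ j) \<le> (\<Sum>j\<in>UNIV. cmod (a j) * cmod (v $ j))"
    by (metis (no_types, lifting) norm_mult norm_sum sum.cong)
  then have "(cmod (\<Sum>j\<in>UNIV. a j * v $ j))\<^sup>2 \<le> (\<Sum>j\<in>UNIV. cmod (a j) * cmod (v $ j))\<^sup>2"
    by (simp add: power_mono)
  also have "\<dots> \<le> (\<Sum>j\<in>UNIV. (cmod (a j))\<^sup>2) * (\<Sum>j\<in>UNIV. (cmod (v $ j))\<^sup>2)"
    by (rule Cauchy_Schwarz_ineq_sum)
  finally show ?thesis by (simp add: nsq_def)
qed

lemma real_fin: 
  fixes t1 t2 f1 f2 n :: real
  assumes "0 \<le> t1" "0 \<le> t2" "t1\<^sup>2 \<le> f1" "t2\<^sup>2 \<le> n * f2" "0 \<le> f2" "0 \<le> n"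
  shows "(t1 + t2)\<^sup>2 \<le> (n + 1) * (f1 + f2)"
proof (cases "n = 0")
  case True
  then have "t2 = 0" using assms(4) by simp
  then show ?thesis using assms True by simp
next
  case False
  then have np: "n > 0" using assms by simp
  have "n * (t1 + t2)\<^sup>2 \<le> n * ((n + 1) * (f1 + f2))"
  proof -
    have "n * (t1 + t2)\<^sup>2 + (n * t1 - t2)\<^sup>2 = (n+1) * (n * t1\<^sup>2 + t2\<^sup>2)"
      by (simp add: power2_eq_square algebra_simps)
    also have "\<dots> \<le> (n+1) * (n * f1 + n * f2)"
      using assms np by (intro mult_left_mono add_mono) auto
    finally have c: "n * (t1 + t2)\<^sup>2 + (n * t1 - t2)\<^sup>2 \<le> (n+1) * (n * f1 + n * f2)" .
    have e: "(n+1)*(n*f1+n*f2) = n*((n+1)*(f1+f2))" by (simp add: algebra_simps)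
    have "0 \<le> (n*t1 - t2)\<^sup>2" by simp
    then show ?thesis using c e by linarith
  qed
  then show ?thesis using np by simp
qed


lemma key:
  "finite S \<Longrightarrow> card S \<le> n \<Longrightarrow> (\<forall>j. x j \<in> vec.span S) \<Longrightarrow>
   (cmod (\<Sum>j\<in>UNIV. x j $ j))\<^sup>2 \<le> real n * (\<Sum>j\<in>UNIV. nsq (x j :: complex^'b))"
proof (induction n arbitrary: S x)
  case 0
  then have "S = {}" by simp
  then have "x j = 0" for j using 0 by simp
  then show ?case by (simp add: nsq_def)
next
  case (Suc n)
  show ?case
  proof (cases "S = {}")
    case True
    then have "x j = 0" for j using Suc by simp
    then show ?thesis by (simp add: nsq_def)
  next
    case False
    then obtain v where vS: "v \<in> S" by blast
    define S' where "S' = S - {v}"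
    have fS': "finite S'" "card S' \<le> n" using Suc.prems vS by (auto simp: S'_def)
    define a where "a j = cinner v (x j) / cinner v v" for j
    define z where "z j = qp v (x j)" for j
    have xd: "x j = a j *s v + z j" for j by (simp add: a_def z_def qp_def)
    have "qp v ` S = insert 0 (qp v ` S')" using vS by (auto simp: S'_def qp_self intro: image_eqI[where x=v])
    then have spq: "vec.span (qp v ` S) = vec.span (qp v ` S')" by simp
    have "z j \<in> vec.span (qp v ` S')" for j
      using Suc.prems(3) vec.linear_span_image[OF qp_linear, of v S] spq by (auto simp: z_def)
    then have IH: "(cmod (\<Sum>j\<in>UNIV. z j $ j))\<^sup>2 \<le> real n * (\<Sum>j\<in>UNIV. nsq (z j))"
      using Suc.IH[of "qp v ` S'" z] fS' by (meson card_image_le finite_imageI le_trans)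
    have T: "(\<Sum>j\<in>UNIV. x j $ j) = (\<Sum>j\<in>UNIV. a j * v $ j) + (\<Sum>j\<in>UNIV. z j $ j)"
      by (simp add: xd sum.distrib)
    have F: "(\<Sum>j\<in>UNIV. nsq (x j)) = (\<Sum>j\<in>UNIV. (cmod (a j))\<^sup>2) * nsq v + (\<Sum>j\<in>UNIV. nsq (z j))"
      proof -
      have "nsq (x j) = (cmod (a j))\<^sup>2 * nsq v + nsq (z j)" for j
      proof -
        have "nsq (a j *s v + z j) = (cmod (a j))\<^sup>2 * nsq v + nsq (z j)"
          unfolding z_def by (rule nsq_pyth[OF cinner_qp])
        then show ?thesis by (simp only: xd[symmetric])
      qed
      then show ?thesis by (simp add: sum.distrib sum_distrib_right)
    qed
    have "(cmod (\<Sum>j\<in>UNIV. x j $ j))\<^sup>2 \<le> (cmod (\<Sum>j\<in>UNIV. a j * v $ j) + cmod (\<Sum>j\<in>UNIV. z j $ j))\<^sup>2"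
      unfolding T by (simp add: norm_triangle_ineq power_mono)
    also have "\<dots> \<le> (real n + 1) * ((\<Sum>j\<in>UNIV. (cmod (a j))\<^sup>2) * nsq v + (\<Sum>j\<in>UNIV. nsq (z j)))"
      by (rule real_fin) (auto simp: IH cs_sum sum_nonneg nsq_ge0)
    finally show ?thesis using F by (metis add.commute of_nat_Suc)
  qed
qed



lemma swap4: "(\<Sum>r\<in>R. \<Sum>s\<in>S. \<Sum>d\<in>D. \<Sum>c\<in>C. f r s d c) = (\<Sum>c\<in>C. \<Sum>d\<in>D. \<Sum>r\<in>R. \<Sum>s\<in>S. f r s d c)"
proof -
  have 1: "(\<Sum>r\<in>R. \<Sum>s\<in>S. \<Sum>d\<in>D. \<Sum>c\<in>C. f r s d c) = (\<Sum>r\<in>R. \<Sum>s\<in>S. \<Sum>c\<in>C. \<Sum>d\<in>D. f r s d c)"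
    by (rule sum.cong[OF refl], rule sum.cong[OF refl], rule sum.swap)
  have 2: "\<dots> = (\<Sum>r\<in>R. \<Sum>c\<in>C. \<Sum>s\<in>S. \<Sum>d\<in>D. f r s d c)"
    by (rule sum.cong[OF refl], rule sum.swap)
  have 3: "\<dots> = (\<Sum>c\<in>C. \<Sum>r\<in>R. \<Sum>s\<in>S. \<Sum>d\<in>D. f r s d c)"
    by (rule sum.swap)
  have 4: "\<dots> = (\<Sum>c\<in>C. \<Sum>r\<in>R. \<Sum>d\<in>D. \<Sum>s\<in>S. f r s d c)"
    by (rule sum.cong[OF refl], rule sum.cong[OF refl], rule sum.swap)
  have 5: "\<dots> = (\<Sum>c\<in>C. \<Sum>d\<in>D. \<Sum>r\<in>R. \<Sum>s\<in>S. f r s d c)"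
    by (rule sum.cong[OF refl], rule sum.swap)
  show ?thesis using 1 2 3 4 5 by simp
qed

definition NN :: "complex^'b^'m \<Rightarrow> complex^'b^'n \<Rightarrow> complex^('m\<times>'n) \<Rightarrow> 'b \<Rightarrow> 'b \<Rightarrow> complex" where
  "NN A B v c d = (\<Sum>r\<in>UNIV. A$(fst r)$c * cnj (v$r) * B$(snd r)$d)"

lemma quad_kron:
  fixes A :: "complex^'b^'m" and B :: "complex^'b^'n"
  shows "cinner v (kron (A ** conj_transpose A) (B ** conj_transpose B) *v v)
     = (\<Sum>c\<in>UNIV. \<Sum>d\<in>UNIV. NN A B v c d * cnj (NN A B v c d))"
proof -
  have "cinner v (kron (A ** conj_transpose A) (B ** conj_transpose B) *v v)
     = (\<Sum>r\<in>UNIV. \<Sum>s\<in>UNIV. \<Sum>d\<in>UNIV. \<Sum>c\<in>UNIV. (A$(fst r)$c * cnj (v$r) * B$(snd r)$d) * (cnj (A$(fst s)$c) * v$s * cnj (B$(snd s)$d)))"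
    by (simp add: cinner_def kron_def matrix_vector_mult_def matrix_matrix_mult_def conj_transpose_def
        sum_distrib_left sum_distrib_right sum_product mult_ac)
  also have "\<dots> = (\<Sum>c\<in>UNIV. \<Sum>d\<in>UNIV. \<Sum>r\<in>UNIV. \<Sum>s\<in>UNIV. (A$(fst r)$c * cnj (v$r) * B$(snd r)$d) * (cnj (A$(fst s)$c) * v$s * cnj (B$(snd s)$d)))"
    by (rule swap4)
  also have "\<dots> = (\<Sum>c\<in>UNIV. \<Sum>d\<in>UNIV. NN A B v c d * cnj (NN A B v c d))"
    by (simp add: NN_def sum_product)
  finally show ?thesis .
qed


lemma cinner_vecm:
  fixes A :: "complex^'b^'m" and B :: "complex^'b^'n"
  shows "cinner (vecm (B ** transpose A)) v = cnj (\<Sum>c\<in>UNIV. NN A B v c c)"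
  apply (simp add: cinner_def vecm_def NN_def matrix_matrix_mult_def transpose_def sum_distrib_left mult_ac)
  by (rule sum.swap)

lemma cinner_outer: "cinner v (outer w w *v v) = cnj (cinner w v) * cinner w v"
  by (simp add: cinner_def outer_def matrix_vector_mult_def sum_distrib_left sum_distrib_right mult_ac)

lemma sc_comp: "(a *\<^sub>R M) $ i $ j = complex_of_real a * (M :: complex^'k^'l) $ i $ j"
  unfolding scaleR_vec_def by (simp add: scaleR_conv_of_real)

lemma cinner_scaleR_mat: "cinner v ((a *\<^sub>R M) *v v) = of_real a * cinner v (M *v v)"
  apply (simp add: cinner_def matrix_vector_mult_def sum_distrib_left sc_comp mult_ac)
  by (simp add: scaleR_conv_of_real)

lemma cinner_diff_mat: "cinner v ((X - Y) *v v) = cinner v (X *v v) - cinner v (Y *v v)"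
  by (simp add: cinner_def matrix_vector_mult_def sum_subtractf left_diff_distrib right_diff_distrib)

lemma herm_diff: "hermitian X \<Longrightarrow> hermitian Y \<Longrightarrow> hermitian (X - Y)"
  by (simp add: hermitian_def conj_transpose_def vec_eq_iff)

lemma herm_scaleR: "hermitian X \<Longrightarrow> hermitian (a *\<^sub>R X)"
  by (simp add: hermitian_def conj_transpose_def vec_eq_iff sc_comp)

lemma herm_outer: "hermitian (outer w w)"
  by (simp add: hermitian_def conj_transpose_def outer_def vec_eq_iff)

lemma herm_gram: "hermitian (A ** conj_transpose A)"
  by (simp add: hermitian_def conj_transpose_def matrix_matrix_mult_def vec_eq_iff mult.commute)

lemma herm_kron: "hermitian X \<Longrightarrow> hermitian Y \<Longrightarrow> hermitian (kron X Y)"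
  by (simp add: hermitian_def conj_transpose_def kron_def vec_eq_iff)



definition Abar :: "complex^'b^'m \<Rightarrow> complex^'b^'m" where
  "Abar A = (\<chi> j c. cnj (A$j$c))"

lemma row_gram: "row i (A ** conj_transpose A) = Abar A *v row i A"
  by (simp add: vec_eq_iff row_def matrix_vector_mult_def matrix_matrix_mult_def conj_transpose_def
      Abar_def mult.commute)

lemma rows_gram: "rows (A ** conj_transpose A) = (\<lambda>x. Abar A *v x) ` rows A"
  unfolding rows_def by (auto simp: row_gram)

lemma cinner_add1: "cinner (x + y) w = cinner x w + cinner y w"
  by (simp add: cinner_def distrib_right sum.distrib)
lemma cinner_scale1: "cinner (a *s x) w = cnj a * cinner x w"
  by (simp add: cinner_def sum_distrib_left algebra_simps)

lemma cinner_zero1: "cinner 0 w = 0"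
  by (simp add: cinner_def)

lemma null_span:
  fixes A :: "complex^'b^'m"
  assumes w: "w \<in> vec.span (rows A)" and z: "Abar A *v w = 0"
  shows "w = 0"
proof -
  let ?T = "{z. cinner z w = 0}"
  have sub: "vec.subspace ?T"
    unfolding vec.subspace_def by (auto simp: cinner_add1 cinner_scale1 cinner_zero1)
  have "rows A \<subseteq> ?T"
  proof
    fix y assume "y \<in> rows A"
    then obtain j where y: "y = row j A" by (auto simp: rows_def)
    have "(Abar A *v w) $ j = 0" using z by simp
    then show "y \<in> ?T" by (simp add: y cinner_def row_def Abar_def matrix_vector_mult_def)
  qed
  then have "vec.span (rows A) \<subseteq> ?T" using sub by (rule vec.span_minimal)
  then have "cinner w w = 0" using w by auto
  then have "nsq w = 0" by (simp add: cinner_self)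
  then show ?thesis by (simp add: nsq_eq0)
qed

lemma inj_abar: "inj_on (\<lambda>x. Abar A *v x) (vec.span (rows A))"
proof (rule inj_onI)
  fix x y assume x: "x \<in> vec.span (rows A)" and y: "y \<in> vec.span (rows A)"
    and e: "Abar A *v x = Abar A *v y"
  have "x - y \<in> vec.span (rows A)" using x y by (rule vec.span_diff)
  moreover have "Abar A *v (x - y) = 0" using e by (simp add: matrix_vector_mult_diff_distrib)
  ultimately have "x - y = 0" by (rule null_span)
  then show "x = y" by simp
qed

lemma rank_gram: "rank (A ** conj_transpose A) = vec.dim (rows (A :: complex^'b^'m))"
  unfolding row_rank_def_gen rows_gram
  by (rule vec.dim_image_eq[OF matrix_vector_mul_linear_gen inj_abar])

lemma cols_in_span:
  fixes A :: "complex^'b^'m" and B :: "complex^'b^'n"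
  shows "(\<chi> c. NN A B v c d) \<in> vec.span (rows A)"
proof -
  have "(\<chi> c. NN A B v c d) = (\<Sum>r\<in>UNIV. (cnj (v$r) * B$(snd r)$d) *s row (fst r) A)"
    by (simp add: vec_eq_iff NN_def row_def mult_ac)
  also have "\<dots> \<in> vec.span (rows A)"
    by (intro vec.span_sum vec.span_scale vec.span_base) (auto simp: rows_def)
  finally show ?thesis .
qed

lemma rows_in_span:
  fixes A :: "complex^'b^'m" and B :: "complex^'b^'n"
  shows "(\<chi> d. NN A B v c d) \<in> vec.span (rows B)"
proof -
  have "(\<chi> d. NN A B v c d) = (\<Sum>r\<in>UNIV. (A$(fst r)$c * cnj (v$r)) *s row (snd r) B)"
    by (simp add: vec_eq_iff NN_def row_def mult_ac)
  also have "\<dots> \<in> vec.span (rows B)"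
    by (intro vec.span_sum vec.span_scale vec.span_base) (auto simp: rows_def)
  finally show ?thesis .
qed

lemma basis_fin: "\<exists>S. finite S \<and> card S = vec.dim V \<and> vec.span V \<subseteq> vec.span (S :: (complex^'b) set)"
proof -
  obtain S where "S \<subseteq> V" "vec.independent S" "V \<subseteq> vec.span S" "card S = vec.dim V"
    by (rule vec.basis_exists)
  then show ?thesis
    by (metis vec.finiteI_independent vec.span_mono vec.span_span)
qed

lemma bound:
  fixes A :: "complex^'b^'m" and B :: "complex^'b^'n"
  shows "(cmod (\<Sum>c\<in>UNIV. NN A B v c c))\<^sup>2
    \<le> real (min (rank (A ** conj_transpose A)) (rank (B ** conj_transpose B)))
       * (\<Sum>c\<in>UNIV. \<Sum>d\<in>UNIV. (cmod (NN A B v c d))\<^sup>2)"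
proof (cases "rank (A ** conj_transpose A) \<le> rank (B ** conj_transpose B)")
  case True
  obtain S where S: "finite S" "card S = vec.dim (rows A)" "vec.span (rows A) \<subseteq> vec.span S"
    using basis_fin by blast
  have "(cmod (\<Sum>d\<in>UNIV. (\<chi> c. NN A B v c d) $ d))\<^sup>2
     \<le> real (rank (A ** conj_transpose A)) * (\<Sum>d\<in>UNIV. nsq (\<chi> c. NN A B v c d))"
  proof -
    have c1: "card S \<le> rank (A ** conj_transpose A)" using S(2) rank_gram[of A] by simp
    have c2: "\<forall>d. (\<chi> c. NN A B v c d) \<in> vec.span S" using S(3) cols_in_span[of A B v] by blast
    show ?thesis by (rule key[OF S(1) c1 c2])
  qed
  moreover have "(\<Sum>d\<in>UNIV. nsq (\<chi> c. NN A B v c d)) = (\<Sum>c\<in>UNIV. \<Sum>d\<in>UNIV. (cmod (NN A B v c d))\<^sup>2)"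
    unfolding nsq_def vec_lambda_beta by (rule sum.swap)
  moreover have "min (rank (A ** conj_transpose A)) (rank (B ** conj_transpose B)) = rank (A ** conj_transpose A)"
    using True by simp
  ultimately show ?thesis by simp
next
  case False
  obtain S where S: "finite S" "card S = vec.dim (rows B)" "vec.span (rows B) \<subseteq> vec.span S"
    using basis_fin by blast
  have "(cmod (\<Sum>c\<in>UNIV. (\<chi> d. NN A B v c d) $ c))\<^sup>2
     \<le> real (rank (B ** conj_transpose B)) * (\<Sum>c\<in>UNIV. nsq (\<chi> d. NN A B v c d))"
  proof -
    have c1: "card S \<le> rank (B ** conj_transpose B)" using S(2) rank_gram[of B] by simp
    have c2: "\<forall>c. (\<chi> d. NN A B v c d) \<in> vec.span S" using S(3) rows_in_span[of A B v] by blast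
    show ?thesis by (rule key[OF S(1) c1 c2])
  qed
  moreover have "min (rank (A ** conj_transpose A)) (rank (B ** conj_transpose B)) = rank (B ** conj_transpose B)"
    using False by simp
  ultimately show ?thesis by (simp add: nsq_def)
qed



lemma quad_real:
  fixes A :: "complex^'b^'m" and B :: "complex^'b^'n"
  shows "cinner v (kron (A ** conj_transpose A) (B ** conj_transpose B) *v v)
     = of_real (\<Sum>c\<in>UNIV. \<Sum>d\<in>UNIV. (cmod (NN A B v c d))\<^sup>2)"
  by (simp add: quad_kron mcnj)

lemma outer_real:
  fixes A :: "complex^'b^'m" and B :: "complex^'b^'n"
  shows "cinner v ((a *\<^sub>R outer (vecm (B ** transpose A)) (vecm (B ** transpose A))) *v v)
     = of_real (a * (cmod (\<Sum>c\<in>UNIV. NN A B v c c))\<^sup>2)"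
  by (simp add: cinner_scaleR_mat cinner_outer cinner_vecm mcnj del: cnj_sum)

lemma part1:
  fixes A :: "complex^'b^'m" and B :: "complex^'b^'n"
  shows "loewner_ge (kron (A ** conj_transpose A) (B ** conj_transpose B))
             ((1 / of_nat (min (rank (A ** conj_transpose A)) (rank (B ** conj_transpose B))))
                *\<^sub>R outer (vecm (B ** transpose A)) (vecm (B ** transpose A)))
         \<and> loewner_ge
             ((1 / of_nat (min (rank (A ** conj_transpose A)) (rank (B ** conj_transpose B))))
                *\<^sub>R outer (vecm (B ** transpose A)) (vecm (B ** transpose A)))
             0"
proof -
  define r where "r = min (rank (A ** conj_transpose A)) (rank (B ** conj_transpose B))"
  define w where "w = vecm (B ** transpose A)"
  have b: "(1 / real r) * (cmod (\<Sum>c\<in>UNIV. NN A B v c c))\<^sup>2 \<le> (\<Sum>c\<in>UNIV. \<Sum>d\<in>UNIV. (cmod (NN A B v c d))\<^sup>2)" for v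
  proof (cases "r = 0")
    case True then show ?thesis by (simp add: sum_nonneg)
  next
    case False
    have "(cmod (\<Sum>c\<in>UNIV. NN A B v c c))\<^sup>2 \<le> real r * (\<Sum>c\<in>UNIV. \<Sum>d\<in>UNIV. (cmod (NN A B v c d))\<^sup>2)"
      using bound[of A B v] by (simp add: r_def)
    then show ?thesis using False by (simp add: field_simps)
  qed
  have h1: "hermitian (kron (A ** conj_transpose A) (B ** conj_transpose B))"
    by (intro herm_kron herm_gram)
  have h2: "hermitian ((1 / real r) *\<^sub>R outer w w)" by (intro herm_scaleR herm_outer)
  have "psd (kron (A ** conj_transpose A) (B ** conj_transpose B) - (1 / real r) *\<^sub>R outer w w)"
    unfolding psd_def
  proof (intro conjI allI)
    show "hermitian (kron (A ** conj_transpose A) (B ** conj_transpose B) - (1 / real r) *\<^sub>R outer w w)"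
      using h1 h2 by (rule herm_diff)
    fix v
    have e: "cinner v ((kron (A ** conj_transpose A) (B ** conj_transpose B) - (1 / real r) *\<^sub>R outer w w) *v v)
      = of_real ((\<Sum>c\<in>UNIV. \<Sum>d\<in>UNIV. (cmod (NN A B v c d))\<^sup>2) - (1 / real r) * (cmod (\<Sum>c\<in>UNIV. NN A B v c c))\<^sup>2)"
      unfolding cinner_diff_mat quad_real w_def outer_real by simp
    show "cinner v ((kron (A ** conj_transpose A) (B ** conj_transpose B) - (1 / real r) *\<^sub>R outer w w) *v v) \<in> \<real>"
      unfolding e by simp
    show "0 \<le> Re (cinner v ((kron (A ** conj_transpose A) (B ** conj_transpose B) - (1 / real r) *\<^sub>R outer w w) *v v))"
      unfolding e using b[of v] by simp
  qed
  moreover have "psd ((1 / real r) *\<^sub>R outer w w - 0)"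
    unfolding psd_def
  proof (intro conjI allI)
    show "hermitian ((1 / real r) *\<^sub>R outer w w - 0)" using h2 by simp
    fix v
    have e: "cinner v (((1 / real r) *\<^sub>R outer w w - 0) *v v)
      = of_real ((1 / real r) * (cmod (\<Sum>c\<in>UNIV. NN A B v c c))\<^sup>2)"
      unfolding diff_zero w_def outer_real by simp
    show "cinner v (((1 / real r) *\<^sub>R outer w w - 0) *v v) \<in> \<real>" unfolding e by simp
    show "0 \<le> Re (cinner v (((1 / real r) *\<^sub>R outer w w - 0) *v v))" unfolding e by simp
  qed
  ultimately show ?thesis unfolding loewner_ge_def r_def w_def by simp
qed



definition E1 :: "'m \<Rightarrow> 'b \<Rightarrow> complex^'b^'m" where
  "E1 i0 c0 = (\<chi> i c. if i = i0 \<and> c = c0 then 1 else 0)"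

lemma E1_nz: "E1 i0 c0 \<noteq> 0"
proof
  assume "E1 i0 c0 = 0"
  then have "E1 i0 c0 $ i0 $ c0 = 0" by simp
  then show False by (simp add: E1_def)
qed

lemma rank_E1: "rank (E1 i0 c0 ** conj_transpose (E1 i0 c0)) = 1"
proof -
  have rw: "row i (E1 i0 c0) = (if i = i0 then axis c0 1 else 0)" for i
    by (simp add: row_def E1_def vec_eq_iff axis_def)
  have "insert 0 (rows (E1 i0 c0)) = {0, axis c0 1}"
    unfolding rows_def rw by auto
  then have "vec.dim (rows (E1 i0 c0)) = vec.dim {0, axis c0 (1::complex)}"
    by (metis vec.dim_span vec.span_insert_0)
  also have "\<dots> = 1"
    by (metis vec.dim_singleton vec.dim_span vec.span_insert_0 axis_eq_0_iff one_neq_zero)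
  finally show ?thesis by (simp add: rank_gram)
qed

lemma NN_E1:
  "NN (E1 i0 c0) (E1 k0 c0) (axis (i0,k0) 1) c d = (if c = c0 \<and> d = c0 then 1 else 0)"
proof -
  have eq: "(\<lambda>r. E1 i0 c0 $(fst r)$c * cnj (axis (i0,k0) 1 $ r) * E1 k0 c0 $(snd r)$d)
      = (\<lambda>r. if r = (i0,k0) then (if c = c0 \<and> d = c0 then 1 else 0) else 0)"
    by (auto simp: fun_eq_iff axis_def E1_def)
  show ?thesis unfolding NN_def eq by simp
qed

lemma part2:
  "\<exists>(A :: complex^'b^'m) (B :: complex^'b^'n) (u :: complex^('m \<times> 'n)).
           A \<noteq> 0 \<and> B \<noteq> 0 \<and> cinner (vecm (B ** transpose A)) u \<noteq> 0 \<and>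
           cinner u (kron (A ** conj_transpose A) (B ** conj_transpose B) *v u)
             = complex_of_real (1 / of_nat (min (rank (A ** conj_transpose A)) (rank (B ** conj_transpose B)))
                 * (cmod (cinner (vecm (B ** transpose A)) u))\<^sup>2)"
proof (intro exI conjI)
  let ?A = "E1 (undefined::'m) (undefined::'b)"
  let ?B = "E1 (undefined::'n) (undefined::'b)"
  let ?u = "axis (undefined::'m, undefined::'n) (1::complex)"
  show "?A \<noteq> 0" "?B \<noteq> 0" by (rule E1_nz)+
  have t: "(\<Sum>c\<in>UNIV. NN ?A ?B ?u c c) = 1"
    by (simp add: NN_E1)
  have f: "(\<Sum>c\<in>UNIV. \<Sum>d\<in>UNIV. (cmod (NN ?A ?B ?u c d))\<^sup>2) = 1"
  proof -
    have "(cmod (NN ?A ?B ?u c d))\<^sup>2 = (if d = undefined then (if c = undefined then 1 else 0) else 0)" for c d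
      by (simp add: NN_E1)
    then show ?thesis by simp
  qed
  show "cinner (vecm (?B ** transpose ?A)) ?u \<noteq> 0"
    by (simp add: cinner_vecm t del: cnj_sum)
  show "cinner ?u (kron (?A ** conj_transpose ?A) (?B ** conj_transpose ?B) *v ?u)
     = complex_of_real (1 / of_nat (min (rank (?A ** conj_transpose ?A)) (rank (?B ** conj_transpose ?B)))
                 * (cmod (cinner (vecm (?B ** transpose ?A)) ?u))\<^sup>2)"
    by (simp add: quad_real f cinner_vecm t rank_E1 del: cnj_sum)
qed


theorem theorem1p3:
  shows "(\<forall>(A :: complex^'b^'m) (B :: complex^'b^'n). A \<noteq> 0 \<longrightarrow> B \<noteq> 0 \<longrightarrow>
           loewner_ge (kron (A ** conj_transpose A) (B ** conj_transpose B))
             ((1 / of_nat (min (rank (A ** conj_transpose A)) (rank (B ** conj_transpose B))))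
                *\<^sub>R outer (vecm (B ** transpose A)) (vecm (B ** transpose A)))
         \<and> loewner_ge
             ((1 / of_nat (min (rank (A ** conj_transpose A)) (rank (B ** conj_transpose B))))
                *\<^sub>R outer (vecm (B ** transpose A)) (vecm (B ** transpose A)))
             0)
       \<and> (\<exists>(A :: complex^'b^'m) (B :: complex^'b^'n) (u :: complex^('m \<times> 'n)).
           A \<noteq> 0 \<and> B \<noteq> 0 \<and> cinner (vecm (B ** transpose A)) u \<noteq> 0 \<and>
           cinner u (kron (A ** conj_transpose A) (B ** conj_transpose B) *v u)
             = complex_of_real (1 / of_nat (min (rank (A ** conj_transpose A)) (rank (B ** conj_transpose B)))
                 * (cmod (cinner (vecm (B ** transpose A)) u))\<^sup>2))"
    using part1 part2 by blast

end
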